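(* Let $C\subseteq\mathbb{F}_2^n$ be a binary linear $[n,k,d]$ code with $\mathbf{1}_n\in C$, whose dual $C^\perp$ has minimum distance $d^\perp$, let $t$ be a positive integer with $$d^\perp-t=\#\{u \mid C_u\neq\emptyset,\ 0<u\le n-t\}=3,$$ and suppose the nonzero weights of $C$ are exactly $d,\ n/2,\ n-d,\ n$ (with $n$ even). (1) If $d^\perp\ge 4$ and $\dim C=k$ (with $2\le k\le n-1$), then $\dfrac{n(2^{k-1}-n)}{(n-2d)^2}$ is a positive integer. (2) If $d^\perp\ge 6$, then $\dfrac{-n^2(n-1)(n-2)}{(n-2d)^2\left(n^2-(4d+3)n+4d^2+2\right)}$ is a positive integer. (3) If $d^\perp\ge 8$, then $n=(m^2+8)/3$ for some $m\in\mathbb{Z}$, and $$\frac{n^2(n^2-3n+2)}{6(3n-8)}=\frac{(m^2+2)(m^2+5)(m^2+8)^2}{486\,m^2}\quad\text{and}\quad \frac{2(n^4-7n^3+23n^2-41n+24)}{3(3n-8)}$$ are positive integers.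
   Context: $\mathbf{1}_n$ is the all-ones vector; $C^\perp$ is the dual code with respect to the standard inner product and $d^\perp$ its minimum nonzero weight; $C_u=\{c\in C:\mathrm{wt}(c)=u\}$ (Hamming weight). The paper notes that in the case $d^\perp-t=3$ the weight distribution of $C$ is supported on $0,d,n/2,n-d,n$ with $n$ even, and works under this assumption throughout. *)

theory Defs
  imports Complex_Main
begin

text \<open>A vector of F_2^n is represented by its support, a subset of {0..<n};
  vector addition is symmetric difference, Hamming weight is card,
  and the standard inner product of x and y is the parity of card (x \<inter> y).\<close>

definition binary_linear_code :: "nat \<Rightarrow> nat set set \<Rightarrow> bool" where
  "binary_linear_code n C \<longleftrightarrow> C \<subseteq> Pow {0..<n} \<and> {} \<in> C \<and>
     (\<forall>x\<in>C. \<forall>y\<in>C. (x - y) \<union> (y - x) \<in> C)"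

definition dual_code :: "nat \<Rightarrow> nat set set \<Rightarrow> nat set set" where
  "dual_code n C = {x. x \<subseteq> {0..<n} \<and> (\<forall>c\<in>C. even (card (x \<inter> c)))}"

definition min_distance :: "nat set set \<Rightarrow> nat \<Rightarrow> bool" where
  "min_distance C d \<longleftrightarrow> (\<exists>c\<in>C. c \<noteq> {} \<and> card c = d) \<and>
     (\<forall>c\<in>C. c \<noteq> {} \<longrightarrow> d \<le> card c)"

end

theory Submission
  imports Defs
begin

definition chi :: "nat set \<Rightarrow> nat set \<Rightarrow> real" where
  "chi X c = (-1) ^ card (c \<inter> X)"

definition sdiff :: "nat set \<Rightarrow> nat set \<Rightarrow> nat set" where
  "sdiff A B = (A - B) \<union> (B - A)"

lemma card_sdiff_parity:
  assumes "finite A" "finite B"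
  shows "(-1::real) ^ card (sdiff A B) = (-1) ^ card A * (-1) ^ card B"
proof -
  have e: "card (sdiff A B) + 2 * card (A \<inter> B) = card A + card B"
  proof -
    have "card (sdiff A B) = card (A - B) + card (B - A)"
      unfolding sdiff_def using assms by (intro card_Un_disjoint) auto
    moreover have "card A = card (A - B) + card (A \<inter> B)"
      proof -
      have "A = (A - B) \<union> (A \<inter> B)" by auto
      then have "card A = card ((A - B) \<union> (A \<inter> B))" by simp
      also have "\<dots> = card (A - B) + card (A \<inter> B)" using assms by (intro card_Un_disjoint) auto
      finally show ?thesis .
    qed
    moreover have "card B = card (B - A) + card (A \<inter> B)"
      proof -
      have "B = (B - A) \<union> (A \<inter> B)" by auto
      then have "card B = card ((B - A) \<union> (A \<inter> B))" by simp
      also have "\<dots> = card (B - A) + card (A \<inter> B)" using assms by (intro card_Un_disjoint) auto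
      finally show ?thesis .
    qed
    ultimately show ?thesis by simp
  qed
  have "(-1::real) ^ card (sdiff A B) = (-1) ^ (card (sdiff A B) + 2 * card (A \<inter> B))"
    by (simp add: power_add power_mult)
  also have "\<dots> = (-1) ^ card A * (-1) ^ card B" by (simp only: e power_add)
  finally show ?thesis .
qed

lemma char_sum:
  assumes lin: "binary_linear_code n D" and X: "X \<subseteq> {0..<n}"
  shows "(\<Sum>c\<in>D. chi X c) = (if X \<in> dual_code n D then real (card D) else 0)"
proof -
  have DP: "D \<subseteq> Pow {0..<n}" and cl: "\<forall>x\<in>D. \<forall>y\<in>D. (x - y) \<union> (y - x) \<in> D"
    using lin unfolding binary_linear_code_def by auto
  have fD: "finite D" using DP finite_subset by (metis finite_Pow_iff finite_atLeastLessThan)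
  show ?thesis
  proof (cases "X \<in> dual_code n D")
    case True
    then have "\<forall>c\<in>D. even (card (X \<inter> c))" unfolding dual_code_def by auto
    then have "\<forall>c\<in>D. chi X c = 1" unfolding chi_def by (simp add: Int_commute)
    then show ?thesis using True by simp
  next
    case False
    then obtain c0 where c0: "c0 \<in> D" "odd (card (X \<inter> c0))" using X unfolding dual_code_def by auto
    have fin: "\<And>c. c \<in> D \<Longrightarrow> finite c" using DP finite_subset by blast
    have key: "\<And>c. c \<in> D \<Longrightarrow> chi X (sdiff c c0) = - chi X c"
    proof -
      fix c assume c: "c \<in> D"
      have "sdiff c c0 \<inter> X = sdiff (c \<inter> X) (c0 \<inter> X)" unfolding sdiff_def by auto
      then have "chi X (sdiff c c0) = (-1) ^ card (c \<inter> X) * (-1) ^ card (c0 \<inter> X)"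
        unfolding chi_def using card_sdiff_parity fin c c0 by simp
      then show "chi X (sdiff c c0) = - chi X c" using c0(2) unfolding chi_def
        by (simp add: Int_commute)
    qed
    have "(\<Sum>c\<in>D. chi X c) = (\<Sum>c\<in>D. chi X (sdiff c c0))"
    proof (rule sum.reindex_bij_witness[where i="\<lambda>c. sdiff c c0" and j="\<lambda>c. sdiff c c0"])
      fix c assume "c \<in> D"
      then show "sdiff (sdiff c c0) c0 = c" "sdiff c c0 \<in> D"
        using cl c0 unfolding sdiff_def by auto
    next
      fix c assume "c \<in> D"
      then show "sdiff (sdiff c c0) c0 = c" "sdiff c c0 \<in> D"
        using cl c0 unfolding sdiff_def by auto
    next
      fix c assume "c \<in> D"
      have "sdiff (sdiff c c0) c0 = c" unfolding sdiff_def by auto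
      then show "chi X (sdiff (sdiff c c0) c0) = chi X c" by simp
    qed
    also have "\<dots> = - (\<Sum>c\<in>D. chi X c)" using key by (simp add: sum_negf)
    finally show ?thesis using False by simp
  qed
qed


lemma chi_flip:
  assumes "finite c" "finite X"
  shows "chi (sdiff X {i}) c = chi X c * (if i \<in> c then -1 else 1)"
proof (cases "i \<in> X")
  case True
  then have e: "sdiff X {i} = X - {i}" unfolding sdiff_def by auto
  show ?thesis
  proof (cases "i \<in> c")
    case True
    have "c \<inter> (X - {i}) = (c \<inter> X) - {i}" by auto
    moreover have "i \<in> c \<inter> X" using True \<open>i \<in> X\<close> by auto
    ultimately have "Suc (card (c \<inter> (X - {i}))) = card (c \<inter> X)"
      using assms by (metis card_Suc_Diff1 finite_Int)
    then have "chi X c = chi (X - {i}) c * (-1)" unfolding chi_def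
      by (metis power_Suc mult.commute)
    then show ?thesis using e True by simp
  next
    case False
    then have "c \<inter> (X - {i}) = c \<inter> X" by auto
    then show ?thesis using e False unfolding chi_def by simp
  qed
next
  case False
  then have e: "sdiff X {i} = insert i X" unfolding sdiff_def by auto
  show ?thesis
  proof (cases "i \<in> c")
    case True
    have "c \<inter> insert i X = insert i (c \<inter> X)" using True by auto
    moreover have "i \<notin> c \<inter> X" using False by auto
    ultimately have "card (c \<inter> insert i X) = Suc (card (c \<inter> X))"
      using assms by simp
    then show ?thesis using e True unfolding chi_def by simp
  next
    case False
    then have "c \<inter> insert i X = c \<inter> X" by auto
    then show ?thesis using e False unfolding chi_def by simp
  qed
qed

lemma sum_sign:
  assumes "c \<subseteq> {0..<n}"
  shows "(\<Sum>i<n. (if i \<in> c then -1 else 1::real)) = real n - 2 * real (card c)"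
proof -
  have fc: "finite c" using assms finite_subset by blast
  have "(\<Sum>i<n. (if i \<in> c then -1 else 1::real)) =
        (\<Sum>i\<in>{..<n} \<inter> {i. i \<in> c}. -1) + (\<Sum>i\<in>{..<n} \<inter> - {i. i \<in> c}. 1)"
    by (rule sum.If_cases) simp
  also have "{..<n} \<inter> {i. i \<in> c} = c" using assms by auto
  also have "{..<n} \<inter> - {i. i \<in> c} = {..<n} - c" by auto
  finally have e: "(\<Sum>i<n. (if i \<in> c then -1 else 1::real)) = - real (card c) + real (card ({..<n} - c))"
    by simp
  have "card ({..<n} - c) = n - card c"
    using assms by (subst card_Diff_subset) (auto simp: fc)
  then show ?thesis using e assms card_mono[of "{0..<n}" c] by (simp add: of_nat_diff)
qed

lemma chi_step:
  assumes "c \<subseteq> {0..<n}" "finite X"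
  shows "chi X c * (real n - 2 * real (card c)) = (\<Sum>i<n. chi (sdiff X {i}) c)"
proof -
  have fc: "finite c" using assms finite_subset by blast
  have "(\<Sum>i<n. chi (sdiff X {i}) c) = (\<Sum>i<n. chi X c * (if i \<in> c then -1 else 1))"
    using chi_flip[OF fc assms(2)] by simp
  also have "\<dots> = chi X c * (\<Sum>i<n. (if i \<in> c then -1 else 1))"
    by (simp add: sum_distrib_left)
  finally show ?thesis using sum_sign[OF assms(1)] by simp
qed

definition fw :: "nat \<Rightarrow> nat set \<Rightarrow> real" where
  "fw n c = real n - 2 * real (card c)"

lemma full_lin: "binary_linear_code n (Pow {0..<n})"
  unfolding binary_linear_code_def by blast

lemma dual_full: "X \<subseteq> {0..<n} \<Longrightarrow> X \<in> dual_code n (Pow {0..<n}) \<longleftrightarrow> X = {}"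
proof
  assume X: "X \<subseteq> {0..<n}" and d: "X \<in> dual_code n (Pow {0..<n})"
  show "X = {}"
  proof (rule ccontr)
    assume "X \<noteq> {}"
    then obtain i where "i \<in> X" by auto
    then have "{i} \<in> Pow {0..<n}" "X \<inter> {i} = {i}" using X by auto
    moreover have "\<forall>c\<in>Pow {0..<n}. even (card (X \<inter> c))" using d unfolding dual_code_def by blast
    ultimately have "even (card {i})" by metis
    then show False by simp
  qed
qed (auto simp: dual_code_def)

lemma moment_transfer:
  assumes lin: "binary_linear_code n C" and dmin: "min_distance (dual_code n C) dp"
  shows "\<forall>X. X \<subseteq> {0..<n} \<longrightarrow> card X + j < dp \<longrightarrow>
     (\<Sum>c\<in>C. chi X c * fw n c ^ j) * 2 ^ n = real (card C) * (\<Sum>c\<in>Pow {0..<n}. chi X c * fw n c ^ j)"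
proof (induction j)
  case 0
  show ?case
  proof (intro allI impI)
    fix X assume X: "X \<subseteq> {0..<n}" and cX: "card X + 0 < dp"
    have "X \<in> dual_code n C \<longleftrightarrow> X = {}"
    proof
      assume "X \<in> dual_code n C"
      then show "X = {}" using dmin cX unfolding min_distance_def by force
    qed (auto simp: dual_code_def)
    then show "(\<Sum>c\<in>C. chi X c * fw n c ^ 0) * 2 ^ n = real (card C) * (\<Sum>c\<in>Pow {0..<n}. chi X c * fw n c ^ 0)"
      using char_sum[OF lin X] char_sum[OF full_lin X] dual_full[OF X]
      by (simp add: card_Pow)
  qed
next
  case (Suc j)
  have DP: "C \<subseteq> Pow {0..<n}" using lin unfolding binary_linear_code_def by auto
  have gen: "(\<Sum>c\<in>D. chi X c * fw n c ^ Suc j) = (\<Sum>i<n. \<Sum>c\<in>D. chi (sdiff X {i}) c * fw n c ^ j)"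
    if "D \<subseteq> Pow {0..<n}" "X \<subseteq> {0..<n}" for D X
  proof -
    have fX: "finite X" using that finite_subset by blast
    have "(\<Sum>c\<in>D. chi X c * fw n c ^ Suc j) = (\<Sum>c\<in>D. (chi X c * fw n c) * fw n c ^ j)"
      by (simp add: mult.assoc)
    also have "\<dots> = (\<Sum>c\<in>D. \<Sum>i<n. chi (sdiff X {i}) c * fw n c ^ j)"
      using that chi_step[OF _ fX] unfolding fw_def by (intro sum.cong) (auto simp: sum_distrib_right)
    also have "\<dots> = (\<Sum>i<n. \<Sum>c\<in>D. chi (sdiff X {i}) c * fw n c ^ j)" by (rule sum.swap)
    finally show ?thesis .
  qed
  show ?case
  proof (intro allI impI)
    fix X assume X: "X \<subseteq> {0..<n}" and cX: "card X + Suc j < dp"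
    have fX: "finite X" using X finite_subset by blast
    have IH: "(\<Sum>c\<in>C. chi (sdiff X {i}) c * fw n c ^ j) * 2 ^ n =
        real (card C) * (\<Sum>c\<in>Pow {0..<n}. chi (sdiff X {i}) c * fw n c ^ j)" if i: "i < n" for i
    proof -
      have s: "sdiff X {i} \<subseteq> {0..<n}" using X i unfolding sdiff_def by auto
      have "sdiff X {i} \<subseteq> insert i X" unfolding sdiff_def by auto
      then have "card (sdiff X {i}) \<le> card (insert i X)" using fX by (intro card_mono) auto
      also have "\<dots> \<le> card X + 1" using fX by (simp add: card_insert_if)
      finally have "card (sdiff X {i}) + j < dp" using cX by simp
      then show ?thesis using Suc.IH s by blast
    qed
    show "(\<Sum>c\<in>C. chi X c * fw n c ^ Suc j) * 2 ^ n = real (card C) * (\<Sum>c\<in>Pow {0..<n}. chi X c * fw n c ^ Suc j)"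
    proof -
      have "(\<Sum>c\<in>C. chi X c * fw n c ^ Suc j) * 2 ^ n =
          (\<Sum>i<n. (\<Sum>c\<in>C. chi (sdiff X {i}) c * fw n c ^ j) * 2 ^ n)"
        by (simp only: gen[OF DP X] sum_distrib_right)
      also have "\<dots> = (\<Sum>i<n. real (card C) * (\<Sum>c\<in>Pow {0..<n}. chi (sdiff X {i}) c * fw n c ^ j))"
        using IH by (intro sum.cong) auto
      also have "\<dots> = real (card C) * (\<Sum>c\<in>Pow {0..<n}. chi X c * fw n c ^ Suc j)"
        by (simp only: gen[OF order_refl X] sum_distrib_left)
      finally show ?thesis .
    qed
  qed
qed


lemma pow_step:
  "(\<Sum>c\<in>Pow {0..<Suc n}. g (fw (Suc n) c)) =
   (\<Sum>c\<in>Pow {0..<n}. g (fw n c + 1) + g (fw n c - 1))"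
proof -
  have e: "{0..<Suc n} = insert n {0..<n}" by auto
  have disj: "Pow {0..<n} \<inter> insert n ` Pow {0..<n} = {}" by auto
  have inj: "inj_on (insert n) (Pow {0..<n})"
    by (rule inj_onI) (metis PowD atLeastLessThan_iff insert_ident less_irrefl subsetD)
  have "(\<Sum>c\<in>Pow {0..<Suc n}. g (fw (Suc n) c)) =
        (\<Sum>c\<in>Pow {0..<n}. g (fw (Suc n) c)) + (\<Sum>c\<in>insert n ` Pow {0..<n}. g (fw (Suc n) c))"
    unfolding e Pow_insert by (rule sum.union_disjoint) (use disj in auto)
  also have "(\<Sum>c\<in>insert n ` Pow {0..<n}. g (fw (Suc n) c)) =
      (\<Sum>c\<in>Pow {0..<n}. g (fw (Suc n) (insert n c)))"
    by (rule sum.reindex[OF inj, unfolded comp_def])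
  also have "\<dots> = (\<Sum>c\<in>Pow {0..<n}. g (fw n c - 1))"
  proof (rule sum.cong[OF refl])
    fix c assume "c \<in> Pow {0..<n}"
    then have "n \<notin> c" "finite c" using finite_subset by auto
    then show "g (fw (Suc n) (insert n c)) = g (fw n c - 1)" unfolding fw_def by simp
  qed
  also have "(\<Sum>c\<in>Pow {0..<n}. g (fw (Suc n) c)) = (\<Sum>c\<in>Pow {0..<n}. g (fw n c + 1))"
    unfolding fw_def by (simp add: algebra_simps)
  finally show ?thesis by (simp add: sum.distrib)
qed

lemma full_moments:
  "(\<Sum>c\<in>Pow {0..<n}. fw n c ^ 0) = 2 ^ n \<and>
   (\<Sum>c\<in>Pow {0..<n}. fw n c ^ 1) = 0 \<and>
   (\<Sum>c\<in>Pow {0..<n}. fw n c ^ 2) = 2 ^ n * real n \<and>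
   (\<Sum>c\<in>Pow {0..<n}. fw n c ^ 4) = 2 ^ n * (3 * real n ^ 2 - 2 * real n) \<and>
   (\<Sum>c\<in>Pow {0..<n}. fw n c ^ 6) = 2 ^ n * (15 * real n ^ 3 - 30 * real n ^ 2 + 16 * real n)"
proof (induction n)
  case 0
  then show ?case by (simp add: fw_def)
next
  case (Suc n)
  let ?S = "\<lambda>j. \<Sum>c\<in>Pow {0..<n}. fw n c ^ j"
  have s0: "(\<Sum>c\<in>Pow {0..<Suc n}. fw (Suc n) c ^ 0) = 2 * ?S 0"
    using pow_step[of "\<lambda>x. x ^ 0" n] by (simp add: sum_distrib_left)
  have s1: "(\<Sum>c\<in>Pow {0..<Suc n}. fw (Suc n) c ^ 1) = 2 * ?S 1"
    using pow_step[of "\<lambda>x. x ^ 1" n] by (simp add: sum_distrib_left)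
  have s2: "(\<Sum>c\<in>Pow {0..<Suc n}. fw (Suc n) c ^ 2) = 2 * ?S 2 + 2 * ?S 0"
  proof -
    have "(\<Sum>c\<in>Pow {0..<Suc n}. fw (Suc n) c ^ 2) = (\<Sum>c\<in>Pow {0..<n}. 2 * fw n c ^ 2 + 2 * fw n c ^ 0)"
      unfolding pow_step[of "\<lambda>x. x ^ 2" n] by (rule sum.cong) (auto simp: algebra_simps power2_eq_square)
    then show ?thesis by (simp only: sum.distrib sum_distrib_left)
  qed
  have s4: "(\<Sum>c\<in>Pow {0..<Suc n}. fw (Suc n) c ^ 4) = 2 * ?S 4 + 12 * ?S 2 + 2 * ?S 0"
  proof -
    have "(\<Sum>c\<in>Pow {0..<Suc n}. fw (Suc n) c ^ 4) = (\<Sum>c\<in>Pow {0..<n}. 2 * fw n c ^ 4 + 12 * fw n c ^ 2 + 2 * fw n c ^ 0)"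
      unfolding pow_step[of "\<lambda>x. x ^ 4" n] by (rule sum.cong) (auto simp: algebra_simps power_def numeral_eq_Suc)
    then show ?thesis by (simp only: sum.distrib sum_distrib_left)
  qed
  have s6: "(\<Sum>c\<in>Pow {0..<Suc n}. fw (Suc n) c ^ 6) = 2 * ?S 6 + 30 * ?S 4 + 30 * ?S 2 + 2 * ?S 0"
  proof -
    have "(\<Sum>c\<in>Pow {0..<Suc n}. fw (Suc n) c ^ 6) = (\<Sum>c\<in>Pow {0..<n}. 2 * fw n c ^ 6 + 30 * fw n c ^ 4 + 30 * fw n c ^ 2 + 2 * fw n c ^ 0)"
      unfolding pow_step[of "\<lambda>x. x ^ 6" n] by (rule sum.cong) (auto simp: algebra_simps power_def numeral_eq_Suc)
    then show ?thesis by (simp only: sum.distrib sum_distrib_left)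
  qed
  show ?case using Suc.IH s0 s1 s2 s4 s6 by (simp add: algebra_simps power2_eq_square power3_eq_cube)
qed


lemma algA:
  fixes K N A x :: real
  assumes E2: "K * N = 2 * N^2 + 2 * A * x"
    and E4: "K * (3 * N^2 - 2 * N) = 2 * N^4 + 2 * A * x^2"
  shows "A * x * (x - (3 * N - 2)) = - (N^2 * (N - 1) * (N - 2))"
  using assms by algebra

lemma algB:
  fixes K N A x :: real
  assumes E2: "K * N = 2 * N^2 + 2 * A * x"
    and E4: "K * (3 * N^2 - 2 * N) = 2 * N^4 + 2 * A * x^2"
    and E6: "K * (15 * N^3 - 30 * N^2 + 16 * N) = 2 * N^6 + 2 * A * x^3"
  shows "A * x * ((x - N^2) * (x - (3 * N - 8))) = 0"
  using assms by algebra

lemma algC: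
  fixes K N A B :: real
  assumes "K = 2 + 2 * A + B" "K * N = 2 * N^2 + 2 * A * (3 * N - 8)"
    "6 * A * (3 * N - 8) = N^2 * (N - 1) * (N - 2)"
  shows "N * (B * (3 * (3 * N - 8)) - 2 * (N^4 - 7 * N^3 + 23 * N^2 - 41 * N + 24)) = 0"
  using assms by algebra

lemma algD:
  fixes M :: real
  assumes "M > 0"
  shows "((M+8)/3)^2 * (((M+8)/3)^2 - 3*((M+8)/3) + 2) / (6*(3*((M+8)/3) - 8)) =
         (M+2)*(M+5)*(M+8)^2/(486*M)"
proof -
  have e: "3*((M+8)/3) - 8 = M" by (simp add: field_simps)
  have "((M+8)/3)^2 * (((M+8)/3)^2 - 3*((M+8)/3) + 2) = (M+2)*(M+5)*(M+8)^2/81"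
    by (simp add: field_simps power2_eq_square; algebra)
  then show ?thesis unfolding e using assms by (simp add: field_simps)
qed

theorem lemma5p1:
  fixes n k d dp t :: nat and C :: "nat set set"
  assumes lin: "binary_linear_code n C"
    and dim: "card C = 2 ^ k"
    and dmin: "min_distance C d"
    and ones: "{0..<n} \<in> C"
    and dpmin: "min_distance (dual_code n C) dp"
    and tpos: "t > 0"
    and dt: "int dp - int t = 3"
    and cnt: "card {u. (\<exists>c\<in>C. card c = u) \<and> 0 < u \<and> u \<le> n - t} = 3"
    and nev: "even n"
    and wts: "{card c | c. c \<in> C \<and> c \<noteq> {}} = {d, n div 2, n - d, n}"
  shows
    "(dp \<ge> 4 \<longrightarrow> 2 \<le> k \<longrightarrow> k \<le> n - 1 \<longrightarrow>
        (\<exists>N::nat. N > 0 \<and>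
           real n * (2 ^ (k - 1) - real n) / (real n - 2 * real d) ^ 2 = real N))
   \<and> (dp \<ge> 6 \<longrightarrow>
        (\<exists>N::nat. N > 0 \<and>
           - (real n ^ 2 * (real n - 1) * (real n - 2)) /
             ((real n - 2 * real d) ^ 2 *
              (real n ^ 2 - (4 * real d + 3) * real n + 4 * real d ^ 2 + 2)) = real N))
   \<and> (dp \<ge> 8 \<longrightarrow>
        (\<exists>m::int. real n = (real_of_int m ^ 2 + 8) / 3 \<and>
           real n ^ 2 * (real n ^ 2 - 3 * real n + 2) / (6 * (3 * real n - 8)) =
             (real_of_int m ^ 2 + 2) * (real_of_int m ^ 2 + 5) * (real_of_int m ^ 2 + 8) ^ 2
               / (486 * real_of_int m ^ 2) \<and>
           (\<exists>N::nat. N > 0 \<and>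
              real n ^ 2 * (real n ^ 2 - 3 * real n + 2) / (6 * (3 * real n - 8)) = real N) \<and>
           (\<exists>N::nat. N > 0 \<and>
              2 * (real n ^ 4 - 7 * real n ^ 3 + 23 * real n ^ 2 - 41 * real n + 24)
                / (3 * (3 * real n - 8)) = real N)))"
proof -
  have DP: "C \<subseteq> Pow {0..<n}" and e0: "{} \<in> C"
    using lin unfolding binary_linear_code_def by auto
  have fC: "finite C" using DP by (meson finite_Pow_iff finite_atLeastLessThan finite_subset)
  have finc: "\<And>c. c \<in> C \<Longrightarrow> finite c" using DP finite_subset by blast
  define W where "W = {card c | c. c \<in> C \<and> c \<noteq> {}}"
  have Wi: "\<And>w. w \<in> W \<longleftrightarrow> (\<exists>c\<in>C. c \<noteq> {} \<and> card c = w)" unfolding W_def by auto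
  have dW: "d \<in> W" and hW: "n div 2 \<in> W" and ndW: "n - d \<in> W" and nW: "n \<in> W"
    using wts unfolding W_def[symmetric] by auto
  obtain h where nh: "n = 2 * h" using nev by blast
  then have hdef: "n div 2 = h" by simp
  have npos: "n > 0"
  proof (rule ccontr)
    assume "\<not> n > 0"
    then have "n = 0" by simp
    then have "\<And>c. c \<in> C \<Longrightarrow> c = {}" using DP by auto
    then show False using dW Wi by blast
  qed
  have dpos: "d > 0"
  proof -
    obtain c where "c \<in> C" "c \<noteq> {}" "card c = d" using dmin unfolding min_distance_def by blast
    then show ?thesis using finc by fastforce
  qed
  have dle: "\<And>c. c \<in> C \<Longrightarrow> c \<noteq> {} \<Longrightarrow> d \<le> card c" using dmin unfolding min_distance_def by blast
  have dleh: "d \<le> h" using hW Wi dle hdef by metis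
  let ?S = "{u. (\<exists>c\<in>C. card c = u) \<and> 0 < u \<and> u \<le> n - t}"
  have Ssub: "?S \<subseteq> {d, h, n - d}"
  proof
    fix u assume u: "u \<in> ?S"
    then obtain c where c: "c \<in> C" "card c = u" "0 < u" "u \<le> n - t" by blast
    then have "c \<noteq> {}" by auto
    then have "u \<in> W" using Wi c by blast
    then have "u \<in> {d, h, n - d, n}" using wts W_def hdef by simp
    moreover have "u \<noteq> n" using c(4) tpos npos by linarith
    ultimately show "u \<in> {d, h, n - d}" by blast
  qed
  have "3 \<le> card {d, h, n - d}" using card_mono[OF _ Ssub] cnt by simp
  then have dneh: "d \<noteq> h" by (cases "d = h") (auto simp: card_insert_if split: if_splits)
  then have dlth: "d < h" using dleh by simp
  have Cimg: "card ` C = {0, d, h, n - d, n}"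
  proof
    show "card ` C \<subseteq> {0, d, h, n - d, n}"
    proof
      fix w assume "w \<in> card ` C"
      then obtain c where c: "c \<in> C" "w = card c" by blast
      show "w \<in> {0, d, h, n - d, n}"
      proof (cases "c = {}")
        case True then show ?thesis using c by simp
      next
        case False
        then have "w \<in> W" using Wi c by blast
        then show ?thesis using wts W_def hdef by simp
      qed
    qed
  next
    have "0 \<in> card ` C" using e0 by force
    moreover have "W \<subseteq> card ` C" unfolding W_def by blast
    ultimately show "{0, d, h, n - d, n} \<subseteq> card ` C" using dW hW ndW nW hdef by auto
  qed
  define a where "a = card {c \<in> C. card c = d}"
  define a' where "a' = card {c \<in> C. card c = n - d}"
  define b where "b = card {c \<in> C. card c = h}"
  have c0: "card {c \<in> C. card c = 0} = 1"
  proof -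
    have "{c \<in> C. card c = 0} = {{}}" using e0 finc by auto
    then show ?thesis by simp
  qed
  have cn: "card {c \<in> C. card c = n} = 1"
  proof -
    have "{c \<in> C. card c = n} = {{0..<n}}"
    proof
      show "{c \<in> C. card c = n} \<subseteq> {{0..<n}}"
      proof
        fix c assume c: "c \<in> {c \<in> C. card c = n}"
        then have "c \<subseteq> {0..<n}" "card c = card {0..<n}" using DP by auto
        then have "c = {0..<n}" by (metis card_subset_eq finite_atLeastLessThan)
        then show "c \<in> {{0..<n}}" by simp
      qed
    qed (use ones in auto)
    then show ?thesis by simp
  qed
  have apos: "a > 0"
  proof -
    obtain c where "c \<in> C" "c \<noteq> {}" "card c = d" using dmin unfolding min_distance_def by blast
    then have "{c \<in> C. card c = d} \<noteq> {}" by blast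
    then show ?thesis unfolding a_def using fC by (simp add: card_gt_0_iff)
  qed
  have bpos: "b > 0"
  proof -
    obtain c where "c \<in> C" "c \<noteq> {}" "card c = h" using hW Wi hdef by metis
    then have "{c \<in> C. card c = h} \<noteq> {}" by blast
    then show ?thesis unfolding b_def using fC by (simp add: card_gt_0_iff)
  qed
  have decomp: "(\<Sum>c\<in>C. g (card c)) = g 0 + real a * g d + real b * g h + real a' * g (n - d) + g n"
    for g :: "nat \<Rightarrow> real"
  proof -
    have "(\<Sum>c\<in>C. g (card c)) = (\<Sum>w\<in>card ` C. \<Sum>c\<in>{c \<in> C. card c = w}. g (card c))"
      by (rule sum.image_gen[OF fC])
    also have "\<dots> = (\<Sum>w\<in>card ` C. real (card {c \<in> C. card c = w}) * g w)"
      by (intro sum.cong refl) simp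
    also have "\<dots> = g 0 + real a * g d + real b * g h + real a' * g (n - d) + g n"
      unfolding Cimg a_def b_def a'_def using dpos dlth nh c0 cn by (simp add: algebra_simps)
    finally show ?thesis .
  qed
  have mom: "(\<Sum>c\<in>C. fw n c ^ j) = real (card C) * (\<Sum>c\<in>Pow {0..<n}. fw n c ^ j) / 2 ^ n"
    if "j < dp" for j
  proof -
    have "(\<Sum>c\<in>C. chi {} c * fw n c ^ j) * 2 ^ n = real (card C) * (\<Sum>c\<in>Pow {0..<n}. chi {} c * fw n c ^ j)"
      using moment_transfer[OF lin dpmin] that by auto
    then show ?thesis by (simp add: chi_def field_simps)
  qed
  define RN where "RN = real n"
  define RD where "RD = real d"
  define s where "s = RN - 2 * RD"
  define K where "K = real (card C)"
  have rh: "real h = RN / 2" using nh RN_def by simp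
  have rnd: "real (n - d) = RN - RD" using dlth nh RN_def RD_def by (simp add: of_nat_diff)
  have fwsum: "(\<Sum>c\<in>C. fw n c ^ j) = RN ^ j + real a * s ^ j + real b * 0 ^ j + real a' * (- s) ^ j + (- RN) ^ j" for j
  proof -
    have "(\<Sum>c\<in>C. fw n c ^ j) = (\<Sum>c\<in>C. (real n - 2 * real (card c)) ^ j)" unfolding fw_def by simp
    also have "\<dots> = RN ^ j + real a * s ^ j + real b * 0 ^ j + real a' * (- s) ^ j + (- RN) ^ j"
      using decomp[of "\<lambda>w. (real n - 2 * real w) ^ j"] rh rnd unfolding s_def RN_def RD_def
      by (simp add: algebra_simps)
    finally show ?thesis .
  qed
  have dp4: "dp \<ge> 4" using dt tpos by linarith
  note FM = full_moments[of n]
  have spos: "s > 0" using dlth nh unfolding s_def RN_def RD_def by simp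
  have slt: "s < RN" using dpos unfolding s_def RN_def RD_def by simp
  have Npos: "RN \<ge> 4" using dpos dlth nh unfolding RN_def by simp
  have momK: "(\<Sum>c\<in>C. fw n c ^ j) = K * ((\<Sum>c\<in>Pow {0..<n}. fw n c ^ j) / 2 ^ n)" if "j < dp" for j
    using mom[OF that] unfolding K_def by simp
  have E1: "0 = RN + real a * s - real a' * s - RN"
    using momK[of 1] fwsum[of 1] FM dp4 by simp
  then have aa: "real a' = real a" using spos by simp
  have E0: "K = 2 + 2 * real a + real b"
  proof -
    have "(\<Sum>c\<in>C. fw n c ^ 0) = K" unfolding K_def by simp
    then show ?thesis using fwsum[of 0] aa by simp
  qed
  have E2: "K * RN = 2 * RN^2 + 2 * real a * s^2"
    using momK[of 2] fwsum[of 2] FM dp4 aa unfolding RN_def by simp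
  have p1: "dp \<ge> 4 \<longrightarrow> 2 \<le> k \<longrightarrow> k \<le> n - 1 \<longrightarrow>
        (\<exists>N::nat. N > 0 \<and> RN * (2 ^ (k - 1) - RN) / (RN - 2 * RD) ^ 2 = real N)"
  proof (intro impI)
    assume k2: "2 \<le> k"
    have "K = 2 * 2 ^ (k - 1)" unfolding K_def dim using k2
      by (metis Suc_diff_1 le_trans of_nat_numeral of_nat_power one_le_numeral power_Suc pos2 zero_less_numeral less_le_trans)
    then have "real a * s^2 = RN * (2 ^ (k - 1) - RN)" using E2 by (simp add: algebra_simps power2_eq_square)
    then have "RN * (2 ^ (k - 1) - RN) / (RN - 2 * RD) ^ 2 = real a"
      using spos unfolding s_def by (simp add: field_simps)
    then show "\<exists>N::nat. N > 0 \<and> RN * (2 ^ (k - 1) - RN) / (RN - 2 * RD) ^ 2 = real N"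
      using apos by blast
  qed
  have E4: "K * (3 * RN^2 - 2 * RN) = 2 * RN^4 + 2 * real a * (s^2)^2" if "dp \<ge> 6"
    using momK[of 4] fwsum[of 4] FM that aa unfolding RN_def by (simp add: power_mult[symmetric])
  have E6: "K * (15 * RN^3 - 30 * RN^2 + 16 * RN) = 2 * RN^6 + 2 * real a * (s^2)^3" if "dp \<ge> 8"
    using momK[of 6] fwsum[of 6] FM that aa unfolding RN_def by (simp add: power_mult[symmetric])
  have Apos: "real a > 0" using apos by simp
  have p2: "dp \<ge> 6 \<longrightarrow>
        (\<exists>N::nat. N > 0 \<and>
           - (RN ^ 2 * (RN - 1) * (RN - 2)) /
             ((RN - 2 * RD) ^ 2 * (RN ^ 2 - (4 * RD + 3) * RN + 4 * RD ^ 2 + 2)) = real N)"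
  proof
    assume "dp \<ge> 6"
    from algA[OF E2 E4[OF this]]
    have A: "real a * s^2 * (s^2 - (3 * RN - 2)) = - (RN^2 * (RN - 1) * (RN - 2))" .
    have nz: "RN^2 * (RN - 1) * (RN - 2) \<noteq> 0" using Npos by simp
    have den: "(RN - 2 * RD) ^ 2 * (RN ^ 2 - (4 * RD + 3) * RN + 4 * RD ^ 2 + 2) = s^2 * (s^2 - (3 * RN - 2))"
      unfolding s_def by (simp add: algebra_simps power2_eq_square)
    have dnz: "s^2 * (s^2 - (3 * RN - 2)) \<noteq> 0" using A nz by auto
    have "- (RN ^ 2 * (RN - 1) * (RN - 2)) / (s^2 * (s^2 - (3 * RN - 2))) = real a"
    proof -
      have "- (RN ^ 2 * (RN - 1) * (RN - 2)) / (s^2 * (s^2 - (3 * RN - 2))) =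
            (real a * (s^2 * (s^2 - (3 * RN - 2)))) / (s^2 * (s^2 - (3 * RN - 2)))"
        using A by (simp only: mult.assoc)
      also have "\<dots> = real a" using dnz by simp
      finally show ?thesis .
    qed
    then show "\<exists>N::nat. N > 0 \<and>
           - (RN ^ 2 * (RN - 1) * (RN - 2)) /
             ((RN - 2 * RD) ^ 2 * (RN ^ 2 - (4 * RD + 3) * RN + 4 * RD ^ 2 + 2)) = real N"
      using apos den by auto
  qed
  have p3: "dp \<ge> 8 \<longrightarrow>
        (\<exists>m::int. RN = (real_of_int m ^ 2 + 8) / 3 \<and>
           RN ^ 2 * (RN ^ 2 - 3 * RN + 2) / (6 * (3 * RN - 8)) =
             (real_of_int m ^ 2 + 2) * (real_of_int m ^ 2 + 5) * (real_of_int m ^ 2 + 8) ^ 2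
               / (486 * real_of_int m ^ 2) \<and>
           (\<exists>N::nat. N > 0 \<and>
              RN ^ 2 * (RN ^ 2 - 3 * RN + 2) / (6 * (3 * RN - 8)) = real N) \<and>
           (\<exists>N::nat. N > 0 \<and>
              2 * (RN ^ 4 - 7 * RN ^ 3 + 23 * RN ^ 2 - 41 * RN + 24)
                / (3 * (3 * RN - 8)) = real N))"
  proof
    assume d8: "dp \<ge> 8"
    have e4: "K * (3 * RN^2 - 2 * RN) = 2 * RN^4 + 2 * real a * (s^2)^2" using E4 d8 by simp
    from algB[OF E2 e4 E6[OF d8]]
    have "real a * s^2 * ((s^2 - RN^2) * (s^2 - (3 * RN - 8))) = 0" .
    moreover have "s^2 \<noteq> RN^2" using power_strict_mono[OF slt, of 2] spos by simp
    ultimately have x: "s^2 = 3 * RN - 8" using Apos spos by simp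
    have A: "real a * s^2 * (s^2 - (3 * RN - 2)) = - (RN^2 * (RN - 1) * (RN - 2))"
      using algA[OF E2 e4] .
    then have A6: "6 * real a * (3 * RN - 8) = RN^2 * (RN - 1) * (RN - 2)"
      unfolding x by (simp add: algebra_simps)
    have pos38: "3 * RN - 8 > 0" using Npos by simp
    define m where "m = int n - 2 * int d"
    have ms: "real_of_int m = s" unfolding m_def s_def RN_def RD_def by simp
    have m2: "real_of_int m ^ 2 = 3 * RN - 8" using x ms by simp
    have q1: "RN ^ 2 * (RN ^ 2 - 3 * RN + 2) / (6 * (3 * RN - 8)) = real a"
      using A6 pos38 by (simp add: field_simps power2_eq_square)
    have q2: "RN ^ 2 * (RN ^ 2 - 3 * RN + 2) / (6 * (3 * RN - 8)) =
             (real_of_int m ^ 2 + 2) * (real_of_int m ^ 2 + 5) * (real_of_int m ^ 2 + 8) ^ 2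
               / (486 * real_of_int m ^ 2)"
    proof -
      have rn: "RN = (real_of_int m ^ 2 + 8) / 3" using m2 by simp
      have mp: "real_of_int m ^ 2 > 0" using m2 pos38 by simp
      show ?thesis unfolding rn by (rule algD[OF mp])
    qed
    have "RN * (real b * (3 * (3 * RN - 8)) - 2 * (RN^4 - 7 * RN^3 + 23 * RN^2 - 41 * RN + 24)) = 0"
      using algC[OF E0 _ A6] E2 x by simp
    then have "real b * (3 * (3 * RN - 8)) = 2 * (RN^4 - 7 * RN^3 + 23 * RN^2 - 41 * RN + 24)"
      using Npos by simp
    then have q3: "2 * (RN ^ 4 - 7 * RN ^ 3 + 23 * RN ^ 2 - 41 * RN + 24) / (3 * (3 * RN - 8)) = real b"
      using pos38 by (simp add: field_simps)
    show "\<exists>m::int. RN = (real_of_int m ^ 2 + 8) / 3 \<and>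
           RN ^ 2 * (RN ^ 2 - 3 * RN + 2) / (6 * (3 * RN - 8)) =
             (real_of_int m ^ 2 + 2) * (real_of_int m ^ 2 + 5) * (real_of_int m ^ 2 + 8) ^ 2
               / (486 * real_of_int m ^ 2) \<and>
           (\<exists>N::nat. N > 0 \<and>
              RN ^ 2 * (RN ^ 2 - 3 * RN + 2) / (6 * (3 * RN - 8)) = real N) \<and>
           (\<exists>N::nat. N > 0 \<and>
              2 * (RN ^ 4 - 7 * RN ^ 3 + 23 * RN ^ 2 - 41 * RN + 24)
                / (3 * (3 * RN - 8)) = real N)"
      using m2 q1 q2 q3 apos bpos by (intro exI[of _ m]) auto
  qed
  show ?thesis using p1 p2 p3 unfolding RN_def RD_def by blast
qed

end
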